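(* Let $h,h'\in\mathbf N$, $w=x_1\cdots x_k\in\{x,y\}^*$, $s$ a right-infinite and $s'$ a left-infinite word over $\{x,y\}$ such that ${}^ts=s'\,x\,y^{h'}\,x\,w$ and ${}^ts'=w\,y\,x^h\,y\,s$, and suppose the frontier $f=s'\,x y^{h'} x\,w\,y x^h y\,s$ is admissible. Embed $f$ and let $t$ be the $SL_2$-tiling with values in $\mathbf N$ extending it. Let $P_0,\dots,P_k$ be the successive path points along the factor $w$ (so $P_0$ precedes $x_1$, $P_j$ lies between $x_j$ and $x_{j+1}$, $P_k$ follows $x_k$), and $b(j,n)=t(P_j+n(1,-1))$. Let $I$ be the path point between $x^h$ and the following $y$ in $yx^hy$, $I'$ the path point between the first $x$ and $y^{h'}$ in $xy^{h'}x$, $J=I+(0,-1)$, $K=I+(0,-2)$, $J'=I'+(1,0)$, $K'=I'+(2,0)$, and put $i_n=t(I+n(1,0))$, $i'_n=t(I'+n(0,-1))$, $j_n=t(J+n(1,-1))$, $k_n=t(K+n(1,-1))$, $j'_n=t(J'+n(1,-1))$, $k'_n=t(K'+n(1,-1))$. Then for all $n\in\mathbf N$: $j_n=(h+1)i_n^2$, $k_n+1=(h+1)i_ni_{n+1}$, $j'_n=(h'+1){i'_n}^2$, $k'_n+1=(h'+1)i'_ni'_{n+1}$; and for $j=1,\dots,k-1$, $b(j,n)b(j,n+1)=1+B$ where $B=b(j-1,n+1)b(j+1,n)$ if $x_jx_{j+1}=xx$; $B=b(j-1,n+1)b(j+1,n+1)$ if $x_jx_{j+1}=xy$; $B=b(j-1,n)b(j+1,n)$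 if $x_jx_{j+1}=yx$; $B=b(j-1,n)b(j+1,n+1)$ if $x_jx_{j+1}=yy$.
   Context: Cartesian coordinates on $\mathbf Z^2$. The transpose ${}^tw$ of a word reverses it and exchanges $x$ and $y$ (transposes of right-infinite words are left-infinite and vice versa). A frontier is a bi-infinite word over $\{x,y\}$, admissible if neither half is ultimately constant; it is embedded as lattice points with each letter $x$ a step $(1,0)$ and each letter $y$ a step $(0,1)$. The extending $SL_2$-tiling is the unique $t:\mathbf Z^2\to\mathbf N$ with $t(a,b+1)t(a+1,b)-t(a,b)t(a+1,b+1)=1$ for all $(a,b)$ and $t=1$ on the path points. *)

theory Defs
  imports Main
begin

datatype letter = X | Y

fun swap_letter :: "letter \<Rightarrow> letter" where
  "swap_letter X = Y" | "swap_letter Y = X"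

text \<open>A right-infinite word s is a function nat => letter, s 0 being its
first (leftmost) letter. A left-infinite word s' is a function nat => letter, s' 0 being
its last (rightmost) letter, s' 1 the one before, etc.
The transpose reverses and exchanges x and y; with these conventions the transpose of a
right-infinite word s is the left-infinite word whose i-th letter from the right is
swap (s i), and symmetrically. Hence in both directions it is pointwise swapping.\<close>
definition transp :: "(nat \<Rightarrow> letter) \<Rightarrow> (nat \<Rightarrow> letter)" where
  "transp s = (\<lambda>i. swap_letter (s i))"

definition prepend_fin :: "letter list \<Rightarrow> (nat \<Rightarrow> letter) \<Rightarrow> (nat \<Rightarrow> letter)" where
  "prepend_fin v s = (\<lambda>i. if i < length v then v ! i else s (i - length v))"

definition append_fin :: "(nat \<Rightarrow> letter) \<Rightarrow> letter list \<Rightarrow> (nat \<Rightarrow> letter)" where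
  "append_fin s' u = (\<lambda>i. if i < length u then rev u ! i else s' (i - length u))"

text \<open>The bi-infinite word s' m s, indexed by int so that m ! 0 is at position 0.\<close>
definition frontier :: "(nat \<Rightarrow> letter) \<Rightarrow> letter list \<Rightarrow> (nat \<Rightarrow> letter) \<Rightarrow> (int \<Rightarrow> letter)" where
  "frontier s' m s = (\<lambda>i. if 0 \<le> i then prepend_fin m s (nat i) else s' (nat (- i - 1)))"

definition admissible :: "(int \<Rightarrow> letter) \<Rightarrow> bool" where
  "admissible f \<longleftrightarrow> \<not> (\<exists>N c. \<forall>i\<ge>N. f i = c) \<and> \<not> (\<exists>N c. \<forall>i\<le>N. f i = c)"

text \<open>Path point p lies between letters f (p-1) and f p.\<close>
definition path_pt :: "(int \<Rightarrow> letter) \<Rightarrow> int \<Rightarrow> int \<times> int" where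
  "path_pt f p = (if 0 \<le> p
     then (int (card {j. 0 \<le> j \<and> j < p \<and> f j = X}), int (card {j. 0 \<le> j \<and> j < p \<and> f j = Y}))
     else (- int (card {j. p \<le> j \<and> j < 0 \<and> f j = X}), - int (card {j. p \<le> j \<and> j < 0 \<and> f j = Y})))"

definition shift :: "int \<times> int \<Rightarrow> int \<Rightarrow> int \<Rightarrow> int \<times> int" where
  "shift P dx dy = (fst P + dx, snd P + dy)"

definition is_ext_tiling :: "(int \<Rightarrow> letter) \<Rightarrow> (int \<times> int \<Rightarrow> nat) \<Rightarrow> bool" where
  "is_ext_tiling f t \<longleftrightarrow>
     (\<forall>a b. t (a, b + 1) * t (a + 1, b) = t (a, b) * t (a + 1, b + 1) + 1) \<and>
     (\<forall>p. t (path_pt f p) = 1)"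

end

theory Submission
  imports Defs
begin


lemma path_neg: "q \<le> 0 \<Longrightarrow> path_pt f q =
  (- int (card {j. q \<le> j \<and> j < 0 \<and> f j = X}), - int (card {j. q \<le> j \<and> j < 0 \<and> f j = Y}))"
proof (cases "q = 0")
  case True
  have a: "{j::int. 0 \<le> j \<and> j < 0 \<and> f j = X} = {}" "{j::int. 0 \<le> j \<and> j < 0 \<and> f j = Y} = {}" by auto
  show ?thesis using True by (simp only: a path_pt_def) simp
qed (auto simp: path_pt_def)

lemma fin1: "finite {j::int. a \<le> j \<and> j < b \<and> P j}"
  by (rule finite_subset[of _ "{a..<b}"]) auto

lemma path_step: "path_pt f (p+1) = (if f p = X then (fst (path_pt f p) + 1, snd (path_pt f p))
   else (fst (path_pt f p), snd (path_pt f p) + 1))"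
proof (cases "p \<ge> 0")
  case True
  have e: "\<And>c. {j. 0 \<le> j \<and> j < p + 1 \<and> f j = c} = (if f p = c then insert p else id) {j. 0 \<le> j \<and> j < p \<and> f j = c}"
    using True by (auto simp: le_less)
  have c: "\<And>c. card {j. 0 \<le> j \<and> j < p + 1 \<and> f j = c} = (if f p = c then 1 else 0) + card {j. 0 \<le> j \<and> j < p \<and> f j = c}"
    unfolding e using fin1[of 0 p] by (auto)
  show ?thesis using True c[of X] c[of Y] by (cases "f p") (auto simp: path_pt_def)
next
  case False
  have e: "\<And>c. {j. p \<le> j \<and> j < 0 \<and> f j = c} = (if f p = c then insert p else id) {j. p+1 \<le> j \<and> j < 0 \<and> f j = c}"
    using False by (auto simp: le_less)
  have c: "\<And>c. card {j. p \<le> j \<and> j < 0 \<and> f j = c} = (if f p = c then 1 else 0) + card {j. p+1 \<le> j \<and> j < 0 \<and> f j = c}"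
    unfolding e using fin1[of "p+1" 0] by (auto)
  show ?thesis using False c[of X] c[of Y] path_neg[of p f] path_neg[of "p+1" f]
    by (cases "f p") auto
qed

definition wd :: "(int \<Rightarrow> letter) \<Rightarrow> int \<Rightarrow> nat \<Rightarrow> letter list" where
  "wd f i d = map (\<lambda>q. f (i + int q)) [0..<d]"

definition cntX :: "letter list \<Rightarrow> nat" where "cntX l = length (filter (\<lambda>c. c = X) l)"
definition cntY :: "letter list \<Rightarrow> nat" where "cntY l = length (filter (\<lambda>c. c = Y) l)"

lemma wd_Suc: "wd f i (Suc d) = wd f i d @ [f (i + int d)]"
  by (simp add: wd_def)

lemma wd_0[simp]: "wd f i 0 = []" by (simp add: wd_def)

lemma wd_Suc_left: "wd f i (Suc d) = f i # wd f (i+1) d"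
  unfolding wd_def by (induct d) (auto simp: algebra_simps)

lemma wd_add: "wd f i (a + b) = wd f i a @ wd f (i + int a) b"
  by (induct b) (auto simp: wd_Suc algebra_simps)

lemma length_wd[simp]: "length (wd f i d) = d" by (simp add: wd_def)
lemma nth_wd: "q < d \<Longrightarrow> wd f i d ! q = f (i + int q)" by (simp add: wd_def)

lemma path_add: "path_pt f (i + int d) = (fst (path_pt f i) + int (cntX (wd f i d)),
    snd (path_pt f i) + int (cntY (wd f i d)))"
proof (induct d)
  case 0 then show ?case by (simp add: cntX_def cntY_def)
next
  case (Suc d)
  have e: "path_pt f (i + int (Suc d)) = path_pt f ((i + int d) + 1)" by (simp add: algebra_simps)
  show ?case unfolding e using Suc path_step[of f "i + int d"]
    by (cases "f (i + int d)") (auto simp: wd_Suc cntX_def cntY_def)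
qed

type_synonym m2 = "int \<times> int \<times> int \<times> int"

fun mmul :: "m2 \<Rightarrow> m2 \<Rightarrow> m2" where
  "mmul (a,b,c,d) (e,f,g,h) = (a*e+b*g, a*f+b*h, c*e+d*g, c*f+d*h)"
fun LM :: "letter \<Rightarrow> m2" where "LM X = (1,0,1,1)" | "LM Y = (1,1,0,1)"
fun MM :: "letter list \<Rightarrow> m2" where
  "MM [] = (1,0,0,1)" | "MM (l # ls) = mmul (LM l) (MM ls)"
definition gg :: "letter list \<Rightarrow> int" where "gg v = fst (MM v)"
fun mdet :: "m2 \<Rightarrow> int" where "mdet (a,b,c,d) = a*d - b*c"
fun tr :: "m2 \<Rightarrow> m2" where "tr (a,b,c,d) = (a,c,b,d)"

lemma mmul_assoc: "mmul (mmul A B) C = mmul A (mmul B C)"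
  by (cases A; cases B; cases C) (simp add: algebra_simps)
lemma mmul_id: "mmul (1,0,0,1) A = A" "mmul A (1,0,0,1) = A"
  by (cases A; simp)+
lemma MM_append: "MM (u @ v) = mmul (MM u) (MM v)"
  by (induct u) (auto simp: mmul_id mmul_assoc)
lemma mdet_mmul: "mdet (mmul A B) = mdet A * mdet B"
  by (cases A; cases B) (simp add: algebra_simps)
lemma det_MM: "mdet (MM v) = 1"
proof (induct v)
  case (Cons l v) then show ?case by (cases l) (simp_all add: mdet_mmul)
qed simp
lemma tr_mmul: "tr (mmul A B) = mmul (tr B) (tr A)"
  by (cases A; cases B) (simp add: algebra_simps)
lemma MM_tr: "MM (rev (map swap_letter v)) = tr (MM v)"
proof (induct v)
  case (Cons l v)
  have "LM (swap_letter l) = tr (LM l)" by (cases l) auto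
  then show ?case using Cons by (simp add: MM_append tr_mmul mmul_id)
qed simp

lemma gg_Nil[simp]: "gg [] = 1" by (simp add: gg_def)
lemma gg_X: "gg (X # v) = gg v"
  by (cases "MM v") (simp add: gg_def)
lemma gg_Y: "gg (v @ [Y]) = gg v"
  by (cases "MM v") (simp add: gg_def MM_append)
lemma gg_YX: "gg u * gg (Y # u @ [X]) = gg (Y # u) * gg (u @ [X]) + 1"
proof -
  obtain p q r s where M: "MM u = (p,q,r,s)" by (cases "MM u") auto
  have "p*s - q*r = 1" using det_MM[of u] M by simp
  then show ?thesis by (simp add: gg_def MM_append M algebra_simps)
qed
lemma gg_tr: "gg (rev (map swap_letter v)) = gg v"
  by (cases "MM v") (simp add: gg_def MM_tr)

lemma hook:
  assumes rel: "\<forall>a b. t (a, b + 1) * t (a + 1, b) = t (a, b) * t (a + 1, b + 1) + (1::nat)"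
    and one: "\<forall>p. t (path_pt f p) = 1"
  shows "int (t (fst (path_pt f (i + int d)), snd (path_pt f i))) = gg (wd f i d)"
proof (induct d arbitrary: i rule: less_induct)
  case (less d i)
  show ?case
  proof (cases d)
    case 0 then show ?thesis using one by simp
  next
    case (Suc d')
    show ?thesis
    proof (cases "f i")
      case X
      have "snd (path_pt f (i+1)) = snd (path_pt f i)" using path_step[of f i] X by simp
      moreover have "i + int d = (i + 1) + int d'" using Suc by simp
      moreover have "wd f i d = X # wd f (i+1) d'" using Suc X by (simp add: wd_Suc_left)
      ultimately show ?thesis using less[of d' "i+1"] Suc by (simp add: gg_X add.assoc)
    next
      case iY: Y
      show ?thesis
      proof (cases "f (i + int d')")
        case Y
        have "fst (path_pt f (i + int d)) = fst (path_pt f (i + int d'))"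
          using path_step[of f "i + int d'"] Y Suc by (simp add: add_ac)
        moreover have "wd f i d = wd f i d' @ [Y]" using Suc Y by (simp add: wd_Suc)
        ultimately show ?thesis using less[of d' i] Suc by (simp add: gg_Y)
      next
        case X
        then obtain e where e: "d' = Suc e" using iY by (cases d') auto
        define u where "u = wd f (i+1) e"
        define a where "a = fst (path_pt f (i + int d'))"
        define b where "b = snd (path_pt f i)"
        have ya: "snd (path_pt f (i+1)) = b + 1" using path_step[of f i] iY b_def by simp
        have xa: "fst (path_pt f (i + int d)) = a + 1"
          using path_step[of f "i + int d'"] X Suc a_def by (simp add: add_ac)
        have i1: "i + 1 + int e = i + int d'" using e by simp
        have i2: "i + 1 + int d' = i + int d" using Suc by simp
        have w1: "wd f i d' = Y # u" using e iY by (simp add: wd_Suc_left u_def)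
        have fx: "f (i+1+int e) = X" using X e by (simp add: add_ac)
        have w2: "wd f (i+1) d' = u @ [X]" unfolding e u_def wd_Suc fx ..
        have "wd f i d = f i # wd f (i+1) d'" unfolding Suc by (rule wd_Suc_left)
        then have w0: "wd f i d = Y # u @ [X]" using w2 iY by simp
        have A0: "int (t (a, b+1)) = gg u" using less[of e "i+1"] e Suc i1 ya a_def u_def by simp
        have A1: "int (t (a, b)) = gg (Y # u)" using less[of d' i] Suc w1 a_def b_def by simp
        have A2: "int (t (a+1, b+1)) = gg (u @ [X])" using less[of d' "i+1"] Suc w2 i2 xa ya by simp
        have R: "int (t (a, b + 1)) * int (t (a + 1, b)) = int (t (a, b)) * int (t (a + 1, b + 1)) + 1"
        proof -
          have "t (a, b + 1) * t (a + 1, b) = t (a, b) * t (a + 1, b + 1) + 1" using rel by blast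
          then have "int (t (a, b + 1) * t (a + 1, b)) = int (t (a, b) * t (a + 1, b + 1) + 1)" by (rule arg_cong)
          then show ?thesis by simp
        qed
        have "gg u * int (t (a + 1, b)) = gg u * gg (Y # u @ [X])"
          using R A0 A1 A2 gg_YX[of u] by simp
        moreover have "gg u \<noteq> 0"
        proof
          assume "gg u = 0"
          then have "t (a, b + 1) = 0" using A0 by simp
          moreover have "t (a, b + 1) * t (a + 1, b) = t (a, b) * t (a + 1, b + 1) + 1" using rel by blast
          ultimately show False by simp
        qed
        ultimately have "int (t (a + 1, b)) = gg (Y # u @ [X])" by simp
        then show ?thesis using xa w0 b_def by simp
      qed
    qed
  qed
qed


lemma swap_swap[simp]: "swap_letter (swap_letter c) = c" by (cases c) auto

lemma sym_words:
  assumes symm: "\<forall>q::nat. f (L - 1 - int q) = swap_letter (f (R + int q))"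
  shows "wd f (L - int m) m = rev (map swap_letter (wd f R m))"
proof (rule nth_equalityI)
  fix q assume "q < length (wd f (L - int m) m)"
  then have q: "q < m" by simp
  have e: "L - 1 - int (m - Suc q) = L - int m + int q" using q by (simp add: of_nat_diff)
  have A: "f (L - int m + int q) = swap_letter (f (R + int (m - Suc q)))"
    using symm[rule_format, of "m - Suc q"] unfolding e .
  show "wd f (L - int m) m ! q = rev (map swap_letter (wd f R m)) ! q"
    using q A by (simp add: nth_wd rev_nth)
qed simp

lemma cntY_tr: "cntY (rev (map swap_letter W)) = cntX W"
proof -
  have "filter (\<lambda>c. c = Y) (map swap_letter W) = map swap_letter (filter (\<lambda>c. c = X) W)"
  proof (induct W)
    case (Cons a W) then show ?case by (cases a) auto
  qed simp
  then show ?thesis by (simp add: cntY_def cntX_def rev_filter[symmetric])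
qed

lemma wd_one: "wd f i 1 = [f i]" by (simp add: wd_def)

lemma sym_pack:
  assumes rel: "\<forall>a b. t (a, b + 1) * t (a + 1, b) = t (a, b) * t (a + 1, b + 1) + (1::nat)"
    and one: "\<forall>p. t (path_pt f p) = 1"
    and symm: "\<forall>q::nat. f (L - 1 - int q) = swap_letter (f (R + int q))"
    and LR: "L \<le> R" and fX: "f (R + int m) = X"
  defines "W \<equiv> wd f R m" and "D \<equiv> nat (R - L)"
  shows "int (t (fst (path_pt f R) + int (cntX W), snd (path_pt f L) - int (cntX W)))
           = gg (rev (map swap_letter W) @ wd f L D @ W)"
    and "int (t (fst (path_pt f R) + int (cntX W), snd (path_pt f L) - int (cntX W) - 1))
           = gg (Y # rev (map swap_letter W) @ wd f L D @ W)"
    and "int (t (fst (path_pt f R) + int (cntX W) + 1, snd (path_pt f L) - int (cntX W)))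
           = gg (rev (map swap_letter W) @ wd f L D @ W @ [X])"
    and "f (R - 1) = Y \<Longrightarrow> int (t (fst (path_pt f R) + int (cntX W), snd (path_pt f (R - 1))))
           = gg (Y # W)"
    and "f (R - 1) = Y \<Longrightarrow> int (t (fst (path_pt f R) + int (cntX W) + 1, snd (path_pt f (R - 1))))
           = gg (Y # W @ [X])"
    and "f L = X \<Longrightarrow> int (t (fst (path_pt f (L + 1)), snd (path_pt f L) - int (cntX W)))
           = gg (Y # W)"
    and "f L = X \<Longrightarrow> int (t (fst (path_pt f (L + 1)), snd (path_pt f L) - int (cntX W) - 1))
           = gg (Y # W @ [X])"
proof -
  note H = hook[OF rel one]
  have Wt: "wd f (L - int m) m = rev (map swap_letter W)" using sym_words[OF symm] W_def by blast
  have yL: "snd (path_pt f L) = snd (path_pt f (L - int m)) + int (cntX W)"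
    using path_add[of f "L - int m" m] Wt cntY_tr by simp
  have xR: "fst (path_pt f (R + int m)) = fst (path_pt f R) + int (cntX W)"
    using path_add[of f R m] W_def by simp
  have xR1: "fst (path_pt f (R + int m + 1)) = fst (path_pt f R) + int (cntX W) + 1"
    using path_step[of f "R + int m"] fX xR by simp
  have LD: "L + int D = R" using LR D_def by simp
  have fY: "f (L - int m - 1) = Y"
  proof -
    have "f (L - 1 - int m) = swap_letter (f (R + int m))" using symm by blast
    moreover have "L - 1 - int m = L - int m - 1" by simp
    ultimately show ?thesis using fX by simp
  qed
  have yL1: "snd (path_pt f (L - int m)) = snd (path_pt f (L - int m - 1)) + 1"
    using path_step[of f "L - int m - 1"] fY by simp
  have w3: "wd f (L - int m) (m + D + m) = rev (map swap_letter W) @ wd f L D @ W"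
    using Wt LD W_def by (simp add: wd_add)
  show "int (t (fst (path_pt f R) + int (cntX W), snd (path_pt f L) - int (cntX W)))
           = gg (rev (map swap_letter W) @ wd f L D @ W)"
  proof -
    have e1: "L - int m + int (m + D + m) = R + int m" using LD by simp
    show ?thesis using H[of "L - int m" "m + D + m", unfolded e1 w3] xR yL by simp
  qed
  show "int (t (fst (path_pt f R) + int (cntX W), snd (path_pt f L) - int (cntX W) - 1))
           = gg (Y # rev (map swap_letter W) @ wd f L D @ W)"
  proof -
    have w: "wd f (L - int m - 1) (1 + (m + D + m)) = Y # rev (map swap_letter W) @ wd f L D @ W"
      using w3 fY by (simp only: wd_add wd_one) simp
    have e1: "L - int m - 1 + int (1 + (m + D + m)) = R + int m" using LD by simp
    show ?thesis using H[of "L - int m - 1" "1 + (m + D + m)", unfolded e1 w] xR yL yL1 by simp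
  qed
  show "int (t (fst (path_pt f R) + int (cntX W) + 1, snd (path_pt f L) - int (cntX W)))
           = gg (rev (map swap_letter W) @ wd f L D @ W @ [X])"
  proof -
    have e1: "L - int m + int (m + D + m + 1) = R + int m + 1" using LD by simp
    have e2: "L - int m + int (m + D + m) = R + int m" using LD by simp
    have w: "wd f (L - int m) (m + D + m + 1) = rev (map swap_letter W) @ wd f L D @ W @ [X]"
      unfolding wd_add[of f "L - int m" "m + D + m" 1] w3 e2 wd_one fX by simp
    show ?thesis using H[of "L - int m" "m + D + m + 1", unfolded e1 w] xR1 yL by simp
  qed
  show "f (R - 1) = Y \<Longrightarrow> int (t (fst (path_pt f R) + int (cntX W), snd (path_pt f (R - 1))))
           = gg (Y # W)"
  proof -
    assume a: "f (R - 1) = Y"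
    have w: "wd f (R - 1) (Suc m) = Y # W" using wd_Suc_left[of f "R-1" m] a W_def by simp
    have e1: "R - 1 + int (Suc m) = R + int m" by simp
    show ?thesis using H[of "R - 1" "Suc m", unfolded e1 w] xR by simp
  qed
  show "f (R - 1) = Y \<Longrightarrow> int (t (fst (path_pt f R) + int (cntX W) + 1, snd (path_pt f (R - 1))))
           = gg (Y # W @ [X])"
  proof -
    assume a: "f (R - 1) = Y"
    have w0: "wd f (R - 1) (Suc m) = Y # W" using wd_Suc_left[of f "R-1" m] a W_def by simp
    have e2: "R - 1 + int (Suc m) = R + int m" by simp
    have w: "wd f (R - 1) (Suc m + 1) = Y # W @ [X]"
      unfolding wd_add[of f "R - 1" "Suc m" 1] w0 e2 wd_one fX by simp
    have e1: "R - 1 + int (Suc m + 1) = R + int m + 1" by simp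
    show ?thesis using H[of "R - 1" "Suc m + 1", unfolded e1 w] xR1 by simp
  qed
  show "f L = X \<Longrightarrow> int (t (fst (path_pt f (L + 1)), snd (path_pt f L) - int (cntX W)))
           = gg (Y # W)"
  proof -
    assume a: "f L = X"
    have e2: "L - int m + int m = L" by simp
    have w: "wd f (L - int m) (m + 1) = rev (map swap_letter (Y # W))"
      unfolding wd_add[of f "L - int m" m 1] Wt e2 wd_one a by simp
    have e1: "L - int m + int (m + 1) = L + 1" by simp
    show ?thesis using H[of "L - int m" "m + 1", unfolded e1 w gg_tr] yL by simp
  qed
  show "f L = X \<Longrightarrow> int (t (fst (path_pt f (L + 1)), snd (path_pt f L) - int (cntX W) - 1))
           = gg (Y # W @ [X])"
  proof -
    assume a: "f L = X"
    have e2: "L - int m + int m = L" by simp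
    have e3: "L - int m - 1 + 1 = L - int m" by simp
    have w: "wd f (L - int m - 1) (Suc (m + 1)) = rev (map swap_letter (Y # W @ [X]))"
      unfolding wd_Suc_left e3 wd_add[of f "L - int m" m 1] Wt e2 wd_one a fY by simp
    have e1: "L - int m - 1 + int (Suc (m + 1)) = L + 1" by simp
    show ?thesis using H[of "L - int m - 1" "Suc (m + 1)", unfolded e1 w gg_tr] yL yL1 by simp
  qed
qed


lemma MM_repX: "MM (replicate h X) = (1, 0, int h, 1)"
  by (induct h) (auto simp: algebra_simps)
lemma MM_repY: "MM (replicate h Y) = (1, int h, 0, 1)"
  by (induct h) (auto simp: algebra_simps)
lemma MM_c1: "MM (Y # replicate h X @ [Y]) = (int h + 1, (int h + 1) + 1, (int h + 1) - 1, int h + 1)"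
  by (simp add: MM_append MM_repX algebra_simps)
lemma MM_c2: "MM (X # replicate h Y @ [X]) = (int h + 1, (int h + 1) + (-1), (int h + 1) - (-1), int h + 1)"
  by (simp add: MM_append MM_repY algebra_simps)

lemma gg_center:
  assumes C: "MM c = (cc, cc + e, cc - e, cc)"
  shows "gg (rev (map swap_letter W) @ c @ W) = cc * (gg (Y # W))^2"
    and "gg (Y # rev (map swap_letter W) @ c @ W) = cc * gg (Y # W) * gg (Y # W @ [X]) - e"
    and "gg (rev (map swap_letter W) @ c @ W @ [X]) = cc * gg (Y # W) * gg (Y # W @ [X]) + e"
proof -
  obtain p q r s where M: "MM W = (p,q,r,s)" by (cases "MM W") auto
  have d: "p*s - q*r = 1" using det_MM[of W] M by simp
  show "gg (rev (map swap_letter W) @ c @ W) = cc * (gg (Y # W))^2"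
    by (simp add: gg_def MM_append MM_tr M C power2_eq_square algebra_simps)
  have "gg (Y # rev (map swap_letter W) @ c @ W) - (cc * gg (Y # W) * gg (Y # W @ [X]) - e) = e * (1 - (p*s - q*r))"
    by (simp add: gg_def MM_append MM_tr M C algebra_simps)
  then show "gg (Y # rev (map swap_letter W) @ c @ W) = cc * gg (Y # W) * gg (Y # W @ [X]) - e"
    using d by simp
  have "gg (rev (map swap_letter W) @ c @ W @ [X]) - (cc * gg (Y # W) * gg (Y # W @ [X]) + e) = e * ((p*s - q*r) - 1)"
    by (simp add: gg_def MM_append MM_tr M C algebra_simps)
  then show "gg (rev (map swap_letter W) @ c @ W @ [X]) = cc * gg (Y # W) * gg (Y # W @ [X]) + e"
    using d by simp
qed

lemma cnt_gap: "(\<forall>q<d. f (R + int a + int q) \<noteq> X) \<Longrightarrow> cntX (wd f R (a + d)) = cntX (wd f R a)"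
proof (induct d)
  case (Suc d)
  then have "f (R + int (a + d)) \<noteq> X" by (simp add: add.assoc)
  then show ?case using Suc by (simp add: wd_Suc cntX_def)
qed simp

lemma ex_pos:
  assumes inf: "\<forall>M. \<exists>i\<ge>M. f i = X"
  shows "\<exists>m. cntX (wd f R m) = n \<and> f (R + int m) = X"
proof -
  have nxt: "\<exists>j. f (R + int a + int j) = X \<and> (\<forall>q<j. f (R + int a + int q) \<noteq> X)" for a
  proof -
    obtain i where i: "i \<ge> R + int a" "f i = X" using inf by blast
    have "\<exists>j. f (R + int a + int j) = X"
      by (rule exI[of _ "nat (i - R - int a)"]) (use i in simp)
    then show ?thesis using exists_least_iff[of "\<lambda>j. f (R + int a + int j) = X"] by blast
  qed
  show ?thesis
  proof (induct n)
    case 0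
    obtain j where j: "f (R + int 0 + int j) = X" "\<forall>q<j. f (R + int 0 + int q) \<noteq> X" using nxt by blast
    have "cntX (wd f R (0 + j)) = cntX (wd f R 0)" by (rule cnt_gap) (use j in blast)
    then show ?case using j by (intro exI[of _ j]) (simp add: cntX_def)
  next
    case (Suc n)
    then obtain m where m: "cntX (wd f R m) = n" "f (R + int m) = X" by blast
    obtain j where j: "f (R + int (m+1) + int j) = X" "\<forall>q<j. f (R + int (m+1) + int q) \<noteq> X" using nxt by blast
    have "cntX (wd f R ((m+1) + j)) = cntX (wd f R (m+1))" by (rule cnt_gap) (use j in blast)
    moreover have "cntX (wd f R (m+1)) = Suc n" using m by (simp add: wd_Suc cntX_def)
    ultimately show ?case using j by (intro exI[of _ "m + 1 + j"]) (simp add: add.assoc)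
  qed
qed



theorem lemma3:
  fixes h h' :: nat and w :: "letter list" and s s' :: "nat \<Rightarrow> letter"
    and t :: "int \<times> int \<Rightarrow> nat"
  defines "k \<equiv> length w"
  defines "f \<equiv> frontier s' ([X] @ replicate h' Y @ [X] @ w @ [Y] @ replicate h X @ [Y]) s"
  defines "P \<equiv> \<lambda>j::nat. path_pt f (int (h' + 2 + j))"
  defines "b \<equiv> \<lambda>(j::nat) (n::nat). t (shift (P j) (int n) (- int n))"
  defines "I \<equiv> path_pt f (int (h' + k + h + 3))"
  defines "I' \<equiv> path_pt f 1"
  defines "J \<equiv> shift I 0 (-1)" and "K \<equiv> shift I 0 (-2)"
  defines "J' \<equiv> shift I' 1 0" and "K' \<equiv> shift I' 2 0"
  defines "i \<equiv> \<lambda>n::nat. t (shift I (int n) 0)"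
  defines "i' \<equiv> \<lambda>n::nat. t (shift I' 0 (- int n))"
  defines "jj \<equiv> \<lambda>n::nat. t (shift J (int n) (- int n))"
  defines "kk \<equiv> \<lambda>n::nat. t (shift K (int n) (- int n))"
  defines "jj' \<equiv> \<lambda>n::nat. t (shift J' (int n) (- int n))"
  defines "kk' \<equiv> \<lambda>n::nat. t (shift K' (int n) (- int n))"
  assumes "transp s = append_fin s' ([X] @ replicate h' Y @ [X] @ w)"
    and "transp s' = prepend_fin (w @ [Y] @ replicate h X @ [Y]) s"
    and "admissible f"
    and "is_ext_tiling f t"
  shows "\<forall>n::nat.
      jj n = (h + 1) * (i n)\<^sup>2 \<and>
      kk n + 1 = (h + 1) * i n * i (n + 1) \<and>
      jj' n = (h' + 1) * (i' n)\<^sup>2 \<and>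
      kk' n + 1 = (h' + 1) * i' n * i' (n + 1) \<and>
      (\<forall>j\<in>{1..k - 1}.
         b j n * b j (n + 1) = 1 +
           (case (w ! (j - 1), w ! j) of
              (X, X) \<Rightarrow> b (j - 1) (n + 1) * b (j + 1) n
            | (X, Y) \<Rightarrow> b (j - 1) (n + 1) * b (j + 1) (n + 1)
            | (Y, X) \<Rightarrow> b (j - 1) n * b (j + 1) n
            | (Y, Y) \<Rightarrow> b (j - 1) n * b (j + 1) (n + 1)))"
proof -
  define pre where "pre = [X] @ replicate h' Y @ [X] @ w"
  define tail where "tail = w @ [Y] @ replicate h X @ [Y]"
  define mw where "mw = [X] @ replicate h' Y @ [X] @ w @ [Y] @ replicate h X @ [Y]"
  have A1: "transp s = append_fin s' pre" unfolding pre_def by fact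
  have A2: "transp s' = prepend_fin tail s" unfolding tail_def by fact
  have adm: "admissible f" by fact
  have til: "is_ext_tiling f t" by fact
  have rel: "\<forall>a b. t (a, b + 1) * t (a + 1, b) = t (a, b) * t (a + 1, b + 1) + 1"
    using til by (simp add: is_ext_tiling_def)
  have one: "\<forall>p. t (path_pt f p) = 1" using til by (simp add: is_ext_tiling_def)
  have fdef: "f = frontier s' mw s" unfolding f_def mw_def ..
  have mw_pre: "mw = pre @ [Y] @ replicate h X @ [Y]" by (simp add: mw_def pre_def)
  have mw_tail: "mw = [X] @ replicate h' Y @ [X] @ tail" by (simp add: mw_def tail_def)
  have len_pre: "length pre = h' + k + 2" by (simp add: pre_def k_def)
  have len_tail: "length tail = k + h + 2" by (simp add: tail_def k_def)
  have len_mw: "length mw = h' + k + h + 4" by (simp add: mw_def k_def)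
  have f_pos: "\<And>q. q < length mw \<Longrightarrow> f (int q) = mw ! q"
    by (simp add: fdef frontier_def prepend_fin_def)
  have f_s: "\<And>q. f (int (length mw) + int q) = s q"
    by (simp add: fdef frontier_def prepend_fin_def nat_add_distrib)
  have f_neg: "\<And>q. f (- 1 - int q) = s' q"
    by (simp add: fdef frontier_def)
  have f_mw: "\<And>q. f (int q) = prepend_fin mw s q"
    by (simp add: fdef frontier_def)
  define L1 where "L1 = int (h' + k + 2)"
  define R1 where "R1 = int (h' + k + h + 4)"
  have sym1: "\<forall>q::nat. f (L1 - 1 - int q) = swap_letter (f (R1 + int q))"
  proof
    fix q :: nat
    have "swap_letter (s q) = append_fin s' pre q" using fun_cong[OF A1, of q] by (simp add: transp_def)
    moreover have "f (L1 - 1 - int q) = append_fin s' pre q"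
    proof (cases "q < length pre")
      case True
      then have e: "L1 - 1 - int q = int (h' + k + 1 - q)" using len_pre L1_def by simp
      have "h' + k + 1 - q < length mw" using len_mw by simp
      then have "f (L1 - 1 - int q) = mw ! (h' + k + 1 - q)" using e f_pos by simp
      also have "\<dots> = pre ! (h' + k + 1 - q)"
      proof -
        have "h' + k + 1 - q < length pre" using len_pre by simp
        then show ?thesis unfolding mw_pre by (simp add: nth_append)
      qed
      also have "\<dots> = append_fin s' pre q" using True len_pre by (simp add: append_fin_def rev_nth)
      finally show ?thesis .
    next
      case False
      then have e: "L1 - 1 - int q = - 1 - int (q - length pre)" using len_pre L1_def by simp
      show ?thesis using False unfolding e f_neg by (simp add: append_fin_def)
    qed
    moreover have "f (R1 + int q) = s q" using f_s len_mw R1_def by simp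
    ultimately show "f (L1 - 1 - int q) = swap_letter (f (R1 + int q))" by simp
  qed
  define R2 where "R2 = int (h' + 2)"
  have sym2: "\<forall>q::nat. f (0 - 1 - int q) = swap_letter (f (R2 + int q))"
  proof
    fix q :: nat
    have "swap_letter (s' q) = prepend_fin tail s q" using fun_cong[OF A2, of q] by (simp add: transp_def)
    moreover have "f (R2 + int q) = prepend_fin tail s q"
    proof -
      have "R2 + int q = int (h' + 2 + q)" using R2_def by simp
      then have "f (R2 + int q) = prepend_fin mw s (h' + 2 + q)" using f_mw by metis
      also have "\<dots> = prepend_fin tail s q"
        using mw_tail len_tail len_mw by (simp add: prepend_fin_def nth_append)
      finally show ?thesis .
    qed
    ultimately have "s' q = swap_letter (f (R2 + int q))" by (metis swap_swap)
    then show "f (0 - 1 - int q) = swap_letter (f (R2 + int q))" using f_neg by simp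
  qed
  have inf: "\<forall>M. \<exists>i\<ge>M. f i = X"
  proof
    fix M
    have "\<not> (\<forall>i\<ge>M. f i = Y)" using adm unfolding admissible_def by blast
    then obtain i where "i \<ge> M" "f i \<noteq> Y" by blast
    then show "\<exists>i\<ge>M. f i = X" by (metis letter.exhaust)
  qed
  have LR1: "L1 \<le> R1" using L1_def R1_def by simp
  have LR2: "0 \<le> R2" using R2_def by simp
  have fR1: "f (R1 - 1) = Y"
  proof -
    have e: "R1 - 1 = int (length mw - 1)" using len_mw R1_def by simp
    have "mw ! (length mw - 1) = Y" by (simp add: mw_def nth_append)
    moreover have "length mw - 1 < length mw" using len_mw by simp
    ultimately show ?thesis unfolding e using f_pos by metis
  qed
  have f0: "f 0 = X" using f_pos[of 0] len_mw by (simp add: mw_def)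
  have c1: "wd f L1 (nat (R1 - L1)) = Y # replicate h X @ [Y]"
  proof (rule nth_equalityI)
    show "length (wd f L1 (nat (R1 - L1))) = length (Y # replicate h X @ [Y])" using L1_def R1_def by simp
    fix q assume "q < length (wd f L1 (nat (R1 - L1)))"
    then have q: "q < h + 2" using L1_def R1_def by simp
    have "wd f L1 (nat (R1 - L1)) ! q = f (int (length pre + q))"
      using q L1_def R1_def len_pre by (simp add: nth_wd add_ac)
    also have "\<dots> = mw ! (length pre + q)" using q len_pre len_mw by (intro f_pos) simp
    also have "\<dots> = (Y # replicate h X @ [Y]) ! q" unfolding mw_pre by (simp only: nth_append_length_plus) simp
    finally show "wd f L1 (nat (R1 - L1)) ! q = (Y # replicate h X @ [Y]) ! q" .
  qed
  have c1': "wd f L1 (h + 1) = Y # replicate h X"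
  proof -
    have "nat (R1 - L1) = (h + 1) + 1" using L1_def R1_def by simp
    then have "wd f L1 (h + 1) @ wd f (L1 + int (h + 1)) 1 = (Y # replicate h X) @ [Y]"
      using c1 wd_add[of f L1 "h+1" 1] by simp
    then show ?thesis by (drule_tac arg_cong[where f="take (Suc h)"]) simp
  qed
  have c2: "wd f 0 (nat (R2 - 0)) = X # replicate h' Y @ [X]"
  proof (rule nth_equalityI)
    show "length (wd f 0 (nat (R2 - 0))) = length (X # replicate h' Y @ [X])" using R2_def by simp
    fix q assume "q < length (wd f 0 (nat (R2 - 0)))"
    then have q: "q < h' + 2" using R2_def by simp
    have "wd f 0 (nat (R2 - 0)) ! q = f (int q)"
      using q R2_def by (simp add: nth_wd)
    also have "\<dots> = mw ! q" using q len_mw by (intro f_pos) simp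
    also have "\<dots> = ((X # replicate h' Y @ [X]) @ tail) ! q" using mw_tail by simp
    also have "\<dots> = (X # replicate h' Y @ [X]) ! q" using q by (simp only: nth_append) simp
    finally show "wd f 0 (nat (R2 - 0)) ! q = (X # replicate h' Y @ [X]) ! q" .
  qed
  have c2': "wd f 1 (h' + 1) = replicate h' Y @ [X]"
  proof -
    have "nat (R2 - 0) = 1 + (h' + 1)" using R2_def by simp
    then have "wd f 0 1 @ wd f (0 + int 1) (h' + 1) = [X] @ (replicate h' Y @ [X])"
      using c2 wd_add[of f 0 1 "h'+1"] by simp
    then show ?thesis by (drule_tac arg_cong[where f="drop 1"]) simp
  qed
  have Ieq: "I = path_pt f (R1 - 1)" using I_def R1_def by (simp add: add_ac)
  have xI: "fst (path_pt f R1) = fst I" using path_step[of f "R1 - 1"] fR1 Ieq by simp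
  have yI: "snd (path_pt f L1) = snd I - 1"
  proof -
    have e: "L1 + int (h + 1) = R1 - 1" using L1_def R1_def by simp
    have "snd (path_pt f (R1 - 1)) = snd (path_pt f L1) + int (cntY (wd f L1 (h + 1)))"
      using path_add[of f L1 "h+1", unfolded e] by simp
    then show ?thesis using c1' Ieq by (simp add: cntY_def)
  qed
  have I'eq: "I' = path_pt f (0 + 1)" using I'_def by simp
  have yI': "snd (path_pt f 0) = snd I'" using path_step[of f 0] f0 I'_def by simp
  have xI': "fst (path_pt f R2) = fst I' + 1"
  proof -
    have e: "1 + int (h' + 1) = R2" using R2_def by simp
    have "fst (path_pt f R2) = fst (path_pt f 1) + int (cntX (wd f 1 (h' + 1)))"
      using path_add[of f 1 "h'+1", unfolded e] by simp
    then show ?thesis using c2' I'_def by (simp add: cntX_def)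
  qed
  have part1: "\<forall>n. jj n = (h + 1) * (i n)\<^sup>2 \<and> kk n + 1 = (h + 1) * i n * i (n + 1)"
  proof
    fix n
    obtain m where m: "cntX (wd f R1 m) = n" "f (R1 + int m) = X" using ex_pos[OF inf] by blast
    define W where "W = wd f R1 m"
    have cW: "cntX W = n" using m(1) W_def by simp
    note P = sym_pack[OF rel one sym1 LR1 m(2), unfolded c1 W_def[symmetric] cW]
    have ii: "int (i n) = gg (Y # W)"
      using P(4)[OF fR1] xI Ieq by (simp add: i_def shift_def)
    have ii1: "int (i (n + 1)) = gg (Y # W @ [X])"
      using P(5)[OF fR1] xI Ieq by (simp add: i_def shift_def add_ac)
    have jn: "int (jj n) = (int h + 1) * (gg (Y # W))\<^sup>2"
      using P(1) xI yI gg_center(1)[OF MM_c1, of W] by (simp add: jj_def J_def shift_def algebra_simps)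
    have kn: "int (kk n) = (int h + 1) * gg (Y # W) * gg (Y # W @ [X]) - 1"
      using P(2) xI yI gg_center(2)[OF MM_c1, of W] by (simp add: kk_def K_def shift_def algebra_simps)
    have "int (jj n) = int ((h + 1) * (i n)\<^sup>2)" using jn ii by (simp add: algebra_simps)
    moreover have "int (kk n + 1) = int ((h + 1) * i n * i (n + 1))" using kn ii ii1 by (simp add: algebra_simps)
    ultimately show "jj n = (h + 1) * (i n)\<^sup>2 \<and> kk n + 1 = (h + 1) * i n * i (n + 1)"
      by (simp only: of_nat_eq_iff)
  qed
  have part2: "\<forall>n. jj' n = (h' + 1) * (i' n)\<^sup>2 \<and> kk' n + 1 = (h' + 1) * i' n * i' (n + 1)"
  proof
    fix n
    obtain m where m: "cntX (wd f R2 m) = n" "f (R2 + int m) = X" using ex_pos[OF inf] by blast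
    define W where "W = wd f R2 m"
    have cW: "cntX W = n" using m(1) W_def by simp
    note P = sym_pack[OF rel one sym2 LR2 m(2), unfolded c2 W_def[symmetric] cW]
    have ii: "int (i' n) = gg (Y # W)"
      using P(6)[OF f0] yI' I'eq by (simp add: i'_def shift_def)
    have ii1: "int (i' (n + 1)) = gg (Y # W @ [X])"
      using P(7)[OF f0] yI' I'eq by (simp add: i'_def shift_def algebra_simps)
    have jn: "int (jj' n) = (int h' + 1) * (gg (Y # W))\<^sup>2"
      using P(1) xI' yI' gg_center(1)[OF MM_c2, of W] by (simp add: jj'_def J'_def shift_def algebra_simps)
    have kn: "int (kk' n) = (int h' + 1) * gg (Y # W) * gg (Y # W @ [X]) + (- 1)"
      using P(3) xI' yI' gg_center(3)[OF MM_c2, of W] by (simp add: kk'_def K'_def shift_def algebra_simps)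
    have "int (jj' n) = int ((h' + 1) * (i' n)\<^sup>2)" using jn ii by (simp add: algebra_simps)
    moreover have "int (kk' n + 1) = int ((h' + 1) * i' n * i' (n + 1))" using kn ii ii1 by (simp add: algebra_simps)
    ultimately show "jj' n = (h' + 1) * (i' n)\<^sup>2 \<and> kk' n + 1 = (h' + 1) * i' n * i' (n + 1)"
      by (simp only: of_nat_eq_iff)
  qed
  have fw: "\<And>q. q < k \<Longrightarrow> f (int (h' + 2 + q)) = w ! q"
  proof -
    fix q assume q: "q < k"
    have "f (int (h' + 2 + q)) = mw ! (h' + 2 + q)" using q len_mw by (intro f_pos) simp
    also have "\<dots> = ((X # replicate h' Y @ [X]) @ tail) ! (h' + 2 + q)" using mw_tail by simp
    also have "\<dots> = tail ! q" by (simp only: nth_append) simp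
    also have "\<dots> = w ! q" using q k_def by (simp add: tail_def nth_append)
    finally show "f (int (h' + 2 + q)) = w ! q" .
  qed
  have part3: "\<forall>n. \<forall>j\<in>{1..k - 1}.
         b j n * b j (n + 1) = 1 +
           (case (w ! (j - 1), w ! j) of
              (X, X) \<Rightarrow> b (j - 1) (n + 1) * b (j + 1) n
            | (X, Y) \<Rightarrow> b (j - 1) (n + 1) * b (j + 1) (n + 1)
            | (Y, X) \<Rightarrow> b (j - 1) n * b (j + 1) n
            | (Y, Y) \<Rightarrow> b (j - 1) n * b (j + 1) (n + 1))"
  proof (intro allI ballI)
    fix n j assume j: "j \<in> {1..k - 1}"
    then have j1: "1 \<le> j" "j < k" by auto
    have l1: "f (int (h' + 2 + (j - 1))) = w ! (j - 1)" using j1 by (intro fw) simp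
    have l2: "f (int (h' + 2 + j)) = w ! j" using j1 by (intro fw) simp
    obtain x y where Pj: "P j = (x, y)" by (cases "P j") auto
    have e1: "int (h' + 2 + j) = int (h' + 2 + (j - 1)) + 1" using j1 by simp
    have Pm: "P j = (if w ! (j - 1) = X then (fst (P (j - 1)) + 1, snd (P (j - 1)))
       else (fst (P (j - 1)), snd (P (j - 1)) + 1))"
      unfolding P_def e1 path_step l1 ..
    have Pp: "P (j + 1) = (if w ! j = X then (fst (P j) + 1, snd (P j))
       else (fst (P j), snd (P j) + 1))"
    proof -
      have "int (h' + 2 + (j + 1)) = int (h' + 2 + j) + 1" by simp
      then show ?thesis unfolding P_def using path_step[of f "int (h' + 2 + j)"] l2 by simp
    qed
    have R: "t (x + int n, y - int n - 1 + 1) * t (x + int n + 1, y - int n - 1) =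
      t (x + int n, y - int n - 1) * t (x + int n + 1, y - int n - 1 + 1) + 1" using rel by blast
    show "b j n * b j (n + 1) = 1 +
           (case (w ! (j - 1), w ! j) of
              (X, X) \<Rightarrow> b (j - 1) (n + 1) * b (j + 1) n
            | (X, Y) \<Rightarrow> b (j - 1) (n + 1) * b (j + 1) (n + 1)
            | (Y, X) \<Rightarrow> b (j - 1) n * b (j + 1) n
            | (Y, Y) \<Rightarrow> b (j - 1) n * b (j + 1) (n + 1))"
    proof (cases "w ! (j - 1)"; cases "w ! j")
      assume a: "w ! (j - 1) = X" "w ! j = X"
      then have "P (j - 1) = (x - 1, y)" "P (j + 1) = (x + 1, y)" using Pm Pp Pj by (auto simp: prod_eq_iff)
      then show ?thesis using a R Pj by (simp add: b_def shift_def algebra_simps)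
    next
      assume a: "w ! (j - 1) = X" "w ! j = Y"
      then have "P (j - 1) = (x - 1, y)" "P (j + 1) = (x, y + 1)" using Pm Pp Pj by (auto simp: prod_eq_iff)
      then show ?thesis using a R Pj by (simp add: b_def shift_def algebra_simps)
    next
      assume a: "w ! (j - 1) = Y" "w ! j = X"
      then have "P (j - 1) = (x, y - 1)" "P (j + 1) = (x + 1, y)" using Pm Pp Pj by (auto simp: prod_eq_iff)
      then show ?thesis using a R Pj by (simp add: b_def shift_def algebra_simps)
    next
      assume a: "w ! (j - 1) = Y" "w ! j = Y"
      then have "P (j - 1) = (x, y - 1)" "P (j + 1) = (x, y + 1)" using Pm Pp Pj by (auto simp: prod_eq_iff)
      then show ?thesis using a R Pj by (simp add: b_def shift_def algebra_simps)
    qed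
  qed
  show ?thesis using part1 part2 part3 by blast
qed
end
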